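(* Let $P=(T;U,V)$ be a 3M-DAP with $t=u=v=2$, and let $\lambda = x_u - x_v$. Then there exists a feasible solution of $P$ all of whose entries lie in the open interval $\left(\frac{x_t+\lambda}{2}, \frac{x_t-\lambda}{2}\right)$; in particular $f(P) > (x_t+\lambda)/2$.
   Context: A three-matrix division and assignment problem (3M-DAP) $P=(T;U,V)$ is specified by integers $t,u,v$ (numbers of columns), integers $s_t, s_u, s_v$ (numbers of rows) and rationals $x_t, x_u, x_v$ (required row sums), subject to: $t \ge 2$, $u \ge 2$, $v \ge 1$; if $v = 1$ then $v s_v \le (t-2)s_t$; $s_t > 0$, $s_u > 0$, $s_v \ge 0$; $s_u u + s_v v = s_t t$; $s_u x_u + s_v x_v = s_t x_t$; and $x_u/u < x_v/v$. A feasible solution assigns real values to the entries of an $s_t\times t$ matrix $T$, an $s_u \times u$ matrix $U$ and an $s_v \times v$ matrix $V$ so that every row of $T$, $U$, $V$ sums to $x_t$, $x_u$, $x_v$ respectively, and the multiset of entries of $T$ equals the multiset union of the entries of $U$ and $V$. $f(P)$ is the maximum, over feasible solutions, of the smallest entry of $T$. *)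

theory Defs
  imports Complex_Main "HOL-Library.Multiset"
begin

text \<open>A 3M-DAP P = (T;U,V): column numbers t,u,v, row numbers s_t,s_u,s_v,
  rational row sums x_t,x_u,x_v.\<close>
definition is_3mdap ::
  "nat \<Rightarrow> nat \<Rightarrow> nat \<Rightarrow> nat \<Rightarrow> nat \<Rightarrow> nat \<Rightarrow> real \<Rightarrow> real \<Rightarrow> real \<Rightarrow> bool" where
  "is_3mdap t u v st su sv xt xu xv \<longleftrightarrow>
     t \<ge> 2 \<and> u \<ge> 2 \<and> v \<ge> 1 \<and>
     (v = 1 \<longrightarrow> v * sv \<le> (t - 2) * st) \<and>
     st > 0 \<and> su > 0 \<and>
     su * u + sv * v = st * t \<and>
     real su * xu + real sv * xv = real st * xt \<and>
     xu / real u < xv / real v \<and>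
     xt \<in> \<rat> \<and> xu \<in> \<rat> \<and> xv \<in> \<rat>"

definition entries :: "nat \<Rightarrow> nat \<Rightarrow> (nat \<Rightarrow> nat \<Rightarrow> real) \<Rightarrow> real multiset" where
  "entries r c M = image_mset (\<lambda>(i,j). M i j) (mset_set ({..<r} \<times> {..<c}))"

definition feasible ::
  "nat \<Rightarrow> nat \<Rightarrow> nat \<Rightarrow> nat \<Rightarrow> nat \<Rightarrow> nat \<Rightarrow> real \<Rightarrow> real \<Rightarrow> real \<Rightarrow>
   (nat \<Rightarrow> nat \<Rightarrow> real) \<Rightarrow> (nat \<Rightarrow> nat \<Rightarrow> real) \<Rightarrow> (nat \<Rightarrow> nat \<Rightarrow> real) \<Rightarrow> bool" where
  "feasible t u v st su sv xt xu xv T U V \<longleftrightarrow>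
     (\<forall>i<st. (\<Sum>j<t. T i j) = xt) \<and>
     (\<forall>i<su. (\<Sum>j<u. U i j) = xu) \<and>
     (\<forall>i<sv. (\<Sum>j<v. V i j) = xv) \<and>
     entries st t T = entries su u U + entries sv v V"

definition f_3mdap ::
  "nat \<Rightarrow> nat \<Rightarrow> nat \<Rightarrow> nat \<Rightarrow> nat \<Rightarrow> nat \<Rightarrow> real \<Rightarrow> real \<Rightarrow> real \<Rightarrow> real" where
  "f_3mdap t u v st su sv xt xu xv =
     Sup {Min (set_mset (entries st t T)) | T U V. feasible t u v st su sv xt xu xv T U V}"

end

theory Submission imports Defs begin
lemma entries2: "entries r 2 M = image_mset (\<lambda>i. M i 0) (mset [0..<r]) + image_mset (\<lambda>i. M i 1) (mset [0..<r])"
proof (induction r)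
  case 0 then show ?case by (simp add: entries_def)
next
  case (Suc r)
  have e: "{..<Suc r} \<times> {..<2::nat} = insert (r,0) (insert (r,1) ({..<r} \<times> {..<2}))"
    by auto
  have "entries (Suc r) 2 M = image_mset (\<lambda>(i,j). M i j) (mset_set (insert (r,0) (insert (r,1) ({..<r} \<times> {..<2}))))"
    unfolding entries_def e ..
  also have "\<dots> = {# M r 0, M r 1 #} + entries r 2 M"
    by (simp add: entries_def)
  finally show ?case using Suc by simp
qed

lemma map_idx: "map (\<lambda>i. g (L!i)) [0..<length L] = map g L"
proof -
  have "map (\<lambda>i. g (L!i)) [0..<length L] = map g (map ((!) L) [0..<length L])" by simp
  then show ?thesis by (simp only: map_nth)
qed

lemma list_entries: "entries (length L) 2 (\<lambda>i j. if j=0 then g (L!i) else h (L!i)) = mset (map g L) + mset (map h L)"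
proof -
  have "entries (length L) 2 (\<lambda>i j. if j=0 then g (L!i) else h (L!i)) =
     mset (map (\<lambda>i. g (L!i)) [0..<length L]) + mset (map (\<lambda>i. h (L!i)) [0..<length L])"
    unfolding entries2 by simp
  then show ?thesis by (simp only: map_idx)
qed

lemma sum_filter01: "(\<forall>x\<in>set xs. (f x::nat) \<le> 1) \<Longrightarrow> sum_list (map f xs) = length (filter (\<lambda>x. f x \<noteq> 0) xs)"
  by (induction xs) auto

lemma tele: "(n::nat) > 0 \<Longrightarrow> (\<Sum>k<N. (Suc k * s) div n - (k * s) div n) = (N * s) div n"
proof (induction N)
  case 0 then show ?case by simp
next
  case (Suc N)
  have "N * s div n \<le> Suc N * s div n" by (simp add: div_le_mono)
  then show ?case using Suc by simp
qed
lemma part_map: "mset (map g (filter P xs)) + mset (map g (filter (\<lambda>x. \<not> P x) xs)) = mset (map g xs)"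
  by (induction xs) auto

lemma mem_entries: "0 < r \<Longrightarrow> M 0 0 \<in># entries r 2 M \<and> M 0 1 \<in># entries r 2 M"
  unfolding entries2 by auto

theorem lemma6:
  fixes st su sv :: nat and xt xu xv :: real
  assumes "is_3mdap 2 2 2 st su sv xt xu xv"
  shows "(\<exists>T U V. feasible 2 2 2 st su sv xt xu xv T U V \<and>
            (\<forall>x \<in># entries st 2 T + entries su 2 U + entries sv 2 V.
                (xt + (xu - xv)) / 2 < x \<and> x < (xt - (xu - xv)) / 2))
         \<and> f_3mdap 2 2 2 st su sv xt xu xv > (xt + (xu - xv)) / 2"
proof -
  define n where "n = st"
  define d where "d = xv - xu"
  have npos: "n > 0" and supos: "su > 0" and nsum: "su + sv = n"
    and wsum: "real su * xu + real sv * xv = real n * xt" and dpos: "d > 0"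
    using assms by (auto simp: is_3mdap_def n_def d_def)
  have rn: "real n = real su + real sv" using nsum by simp
  have xt_eq: "xt = xu + d * real sv / real n"
  proof -
    have "real n * (xt - xu) = d * real sv" using wsum rn by (simp add: d_def algebra_simps)
    then show ?thesis using npos by (simp add: field_simps)
  qed
  define r where "r k = real (k * sv mod n)" for k
  define a where "a k = xt/2 + d * ((real n - 1 - 2 * r k) / (2 * real n))" for k
  define \<delta> where "\<delta> k = Suc k * sv div n - k * sv div n" for k
  have svle: "sv \<le> n" using nsum by simp
  have \<delta>1: "\<delta> k \<le> 1" for k
  proof -
    have "Suc k * sv div n \<le> (k * sv + n) div n" using svle by (intro div_le_mono) simp
    also have "\<dots> = k * sv div n + 1" using npos by simp
    finally show ?thesis unfolding \<delta>_def by simp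
  qed
  have rdef: "r k = real (k*sv) - real n * real (k * sv div n)" for k
  proof -
    have "k*sv = n * (k*sv div n) + k*sv mod n" by simp
    then have "real (k*sv) = real n * real (k*sv div n) + real (k*sv mod n)"
      by (metis of_nat_add of_nat_mult)
    then show ?thesis unfolding r_def by simp
  qed
  have step: "xt - a k + a (Suc k) = xu + d * real (\<delta> k)" for k
  proof -
    have mono: "k * sv div n \<le> Suc k * sv div n" by (simp add: div_le_mono)
    have "real (\<delta> k) = real (Suc k * sv div n) - real (k * sv div n)"
      unfolding \<delta>_def using mono by (simp add: of_nat_diff)
    moreover have "r (Suc k) - r k = real sv - real n * (real (Suc k * sv div n) - real (k * sv div n))"
      unfolding rdef by (simp add: algebra_simps)
    ultimately have "r (Suc k) - r k = real sv - real n * real (\<delta> k)" by simp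
    moreover have "a (Suc k) - a k = - d * (r (Suc k) - r k) / real n"
      unfolding a_def using npos by (simp add: field_simps)
    ultimately have "a (Suc k) - a k = - d * (real sv - real n * real (\<delta> k)) / real n"
      by simp
    also have "\<dots> = - d * real sv / real n + d * real (\<delta> k)"
      using npos by (simp add: field_simps)
    finally have "a (Suc k) - a k = - d * real sv / real n + d * real (\<delta> k)" .
    then show ?thesis using xt_eq by simp
  qed
  have an: "a n = a 0" unfolding a_def r_def by simp
  define lo where "lo = (xt + (xu - xv)) / 2"
  define hi where "hi = (xt - (xu - xv)) / 2"
  have bnd: "lo < a k \<and> a k < hi \<and> lo < xt - a k \<and> xt - a k < hi" for k
  proof -
    define c where "c = (real n - 1 - 2 * r k) / (2 * real n)"
    have r0: "r k \<ge> 0" and r1: "r k + 1 \<le> real n"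
    proof -
      show "r k \<ge> 0" unfolding r_def by simp
      have "k * sv mod n < n" using npos by simp
      then show "r k + 1 \<le> real n" unfolding r_def by linarith
    qed
    have c1: "c < 1/2" unfolding c_def using npos r0 by (simp add: field_simps)
    have c2: "c > -1/2" unfolding c_def using npos r1 by (simp add: field_simps)
    have "d * c < d * (1/2)" using dpos c1 by (intro mult_strict_left_mono)
    moreover have "d * (-1/2) < d * c" using dpos c2 by (intro mult_strict_left_mono)
    moreover have "a k = xt/2 + d * c" unfolding a_def c_def ..
    ultimately show ?thesis unfolding lo_def hi_def d_def by (simp add: field_simps)
  qed
  define T where "T i j = (if j = 0 then a i else xt - a i)" for i j :: nat
  define KU where "KU = filter (\<lambda>k. \<delta> k = 0) [0..<n]"
  define KV where "KV = filter (\<lambda>k. \<not> \<delta> k = 0) [0..<n]"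
  define U where "U i j = (if j = 0 then xt - a (KU!i) else a (Suc (KU!i)))" for i j :: nat
  define V where "V i j = (if j = 0 then xt - a (KV!i) else a (Suc (KV!i)))" for i j :: nat
  have lKV: "length KV = sv"
  proof -
    have "sum_list (map \<delta> [0..<n]) = length KV"
      unfolding KV_def using \<delta>1 by (intro sum_filter01) auto
    moreover have "sum_list (map \<delta> [0..<n]) = sum \<delta> {..<n}"
      by (simp add: interv_sum_list_conv_sum_set_nat atLeast0LessThan)
    moreover have "sum \<delta> {..<n} = n * sv div n" unfolding \<delta>_def using tele npos by blast
    ultimately show ?thesis using npos by simp
  qed
  have lKU: "length KU = su"
    using sum_length_filter_compl[of "\<lambda>k. \<delta> k = 0" "[0..<n]"] lKV nsum
    unfolding KU_def KV_def by simp
  have ET: "entries st 2 T = mset (map a [0..<n]) + mset (map (\<lambda>k. xt - a k) [0..<n])"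
    unfolding entries2 T_def n_def by simp
  have EU: "entries su 2 U = mset (map (\<lambda>k. xt - a k) KU) + mset (map (\<lambda>k. a (Suc k)) KU)"
    unfolding U_def lKU[symmetric] by (rule list_entries)
  have EV: "entries sv 2 V = mset (map (\<lambda>k. xt - a k) KV) + mset (map (\<lambda>k. a (Suc k)) KV)"
    unfolding V_def lKV[symmetric] by (rule list_entries)
  have shift: "mset (map (\<lambda>k. a (Suc k)) [0..<n]) = mset (map a [0..<n])"
  proof -
    have u: "[Suc 0..<Suc n] = [Suc 0..<n] @ [n]" using npos by (intro upt_Suc_append) simp
    have "map (\<lambda>k. a (Suc k)) [0..<n] = map a [Suc 0..<Suc n]"
      by (simp only: map_Suc_upt[symmetric] map_map comp_def)
    then have 1: "map (\<lambda>k. a (Suc k)) [0..<n] = map a [Suc 0..<n] @ [a n]"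
      unfolding u by simp
    have 2: "[0..<n] = 0 # [Suc 0..<n]" using npos by (simp add: upt_conv_Cons)
    show ?thesis unfolding 1 using an by (subst 2) simp
  qed
  have Esum: "entries su 2 U + entries sv 2 V = entries st 2 T"
  proof -
    have "entries su 2 U + entries sv 2 V =
      (mset (map (\<lambda>k. xt - a k) KU) + mset (map (\<lambda>k. xt - a k) KV)) +
      (mset (map (\<lambda>k. a (Suc k)) KU) + mset (map (\<lambda>k. a (Suc k)) KV))"
      unfolding EU EV by (simp add: ac_simps)
    also have "\<dots> = mset (map (\<lambda>k. xt - a k) [0..<n]) + mset (map (\<lambda>k. a (Suc k)) [0..<n])"
      unfolding KU_def KV_def part_map ..
    finally show ?thesis unfolding ET shift by (simp add: ac_simps)
  qed
  have feas: "feasible 2 2 2 st su sv xt xu xv T U V"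
    unfolding feasible_def
  proof (intro conjI allI impI)
    show "(\<Sum>j<2. T i j) = xt" for i by (simp add: T_def numeral_2_eq_2)
    show "(\<Sum>j<2. U i j) = xu" if "i < su" for i
    proof -
      have "KU ! i \<in> set KU" using that lKU by simp
      then have "\<delta> (KU ! i) = 0" unfolding KU_def by simp
      then show ?thesis using step[of "KU!i"] by (simp add: U_def numeral_2_eq_2)
    qed
    show "(\<Sum>j<2. V i j) = xv" if "i < sv" for i
    proof -
      have "KV ! i \<in> set KV" using that lKV by simp
      then have "\<delta> (KV ! i) \<noteq> 0" unfolding KV_def by simp
      then have "\<delta> (KV ! i) = 1" using \<delta>1[of "KV!i"] by simp
      then show ?thesis using step[of "KV!i"] by (simp add: V_def numeral_2_eq_2 d_def)
    qed
    show "entries st 2 T = entries su 2 U + entries sv 2 V" using Esum by simp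
  qed
  have inT: "lo < x \<and> x < hi" if "x \<in># entries st 2 T" for x
    using that bnd unfolding ET by auto
  have part1: "\<forall>x \<in># entries st 2 T + entries su 2 U + entries sv 2 V. lo < x \<and> x < hi"
    using inT unfolding add.assoc Esum by auto
  define S where "S = {Min (set_mset (entries st 2 T)) |T U V. feasible 2 2 2 st su sv xt xu xv T U V}"
  have bdd: "bdd_above S"
  proof (rule bdd_aboveI)
    fix m assume "m \<in> S"
    then obtain T' U' V' where m: "m = Min (set_mset (entries st 2 T'))"
      and f: "feasible 2 2 2 st su sv xt xu xv T' U' V'" unfolding S_def by blast
    have "T' 0 0 + T' 0 1 = xt" using f npos unfolding feasible_def n_def
      by (auto simp: numeral_2_eq_2)
    moreover have "m \<le> T' 0 0" "m \<le> T' 0 1" unfolding m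
      using mem_entries[of st T'] npos n_def by auto
    ultimately show "m \<le> xt/2" by linarith
  qed
  have mT: "Min (set_mset (entries st 2 T)) \<in> S" unfolding S_def using feas by blast
  have ne: "set_mset (entries st 2 T) \<noteq> {}" using mem_entries[of st T] npos n_def by auto
  have "lo < Min (set_mset (entries st 2 T))"
    using ne inT by (subst Min_gr_iff) auto
  also have "\<dots> \<le> Sup S" using cSup_upper[OF mT bdd] .
  finally have "lo < f_3mdap 2 2 2 st su sv xt xu xv" unfolding f_3mdap_def S_def .
  then show ?thesis using feas part1 unfolding lo_def hi_def by blast
qed

end
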